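(* Let $n\ge2$ and $x_j:=-\cos\frac{j\pi}{n}$ for $0\le j\le n$. For every integer $k$ with $1\le k\le n/2$, \[ \sum_{j=0}^{k-1}\frac{1}{x_k-x_j}\le\frac{1+k\log(4k-1)}{2\sin\frac{k\pi}{n}\,\sin\frac{k\pi}{2n}}\le\frac{n^2}{4\sqrt2\,k^2}\bigl(1+k\log(4k-1)\bigr) \] and \[ \sum_{j=k+1}^{n}\frac{1}{x_j-x_k}\le\frac{3n^2}{4\sqrt2\,k}\log(4k+1). \] In particular, for such $k$, $\sum_{j\neq k}\frac{1}{|x_k-x_j|}\le\frac{n^2}{4\sqrt2}(1+\log3+3\log5)<1.3\,n^2$. Moreover, $\sum_{j=1}^n\frac{1}{x_j-x_0}\le\frac{\pi^2n^2}{12}<0.9\,n^2$.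
   Context: $\log$ denotes the natural logarithm. *)

theory Defs
  imports "HOL-Analysis.Analysis"
begin

definition cheb_node :: "nat \<Rightarrow> nat \<Rightarrow> real" where
  "cheb_node n j = - cos (real j * pi / real n)"

end

theory Submission
  imports Defs "HOL-Analysis.Harmonic_Numbers" "HOL-Analysis.Gamma_Function"
begin

lemma xcos_le_sin:
  fixes x :: real assumes "0 \<le> x" "x \<le> pi" shows "x * cos x \<le> sin x"
proof -
  have "(\<lambda>x. sin x - x * cos x) 0 \<le> (\<lambda>x. sin x - x * cos x) x"
  proof (rule DERIV_nonneg_imp_nondecreasing[OF assms(1)])
    fix y :: real assume y: "0 \<le> y" "y \<le> x"
    have "DERIV (\<lambda>x. sin x - x * cos x) y :> y * sin y"
      by (auto intro!: derivative_eq_intros simp: algebra_simps)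
    moreover have "y * sin y \<ge> 0" using y assms by (intro mult_nonneg_nonneg sin_ge_zero) auto
    ultimately show "\<exists>d. DERIV (\<lambda>x. sin x - x * cos x) y :> d \<and> d \<ge> 0" by blast
  qed
  thus ?thesis by simp
qed

lemma sin_ratio:
  fixes s t :: real assumes "0 \<le> s" "s \<le> t" "t \<le> pi" shows "s * sin t \<le> t * sin s"
proof (cases "s = 0")
  case True thus ?thesis by simp
next
  case False
  hence s: "s > 0" using assms by simp
  have "(\<lambda>x. sin x / x) t \<le> (\<lambda>x. sin x / x) s"
  proof (rule DERIV_nonpos_imp_nonincreasing[OF assms(2)])
    fix y :: real assume y: "s \<le> y" "y \<le> t"
    have "DERIV (\<lambda>x. sin x / x) y :> (cos y * y - sin y) / y\<^sup>2"
      using y s by (auto intro!: derivative_eq_intros simp: power2_eq_square)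
    moreover have "(cos y * y - sin y) / y\<^sup>2 \<le> 0"
      using xcos_le_sin[of y] y s assms by (intro divide_nonpos_nonneg) (auto simp: mult.commute)
    ultimately show "\<exists>d. DERIV (\<lambda>x. sin x / x) y :> d \<and> d \<le> 0" by blast
  qed
  hence "sin t / t \<le> sin s / s" by simp
  thus ?thesis using s assms by (simp add: field_simps)
qed

definition H :: "nat \<Rightarrow> real" where "H m = (\<Sum>i<m. 1 / (real i + 1))"

lemma H_Suc: "H (Suc m) = H m + 1 / (real m + 1)" by (simp add: H_def)
lemma H_0: "H 0 = 0" by (simp add: H_def)
lemma H_mono: "m \<le> p \<Longrightarrow> H m \<le> H p"
  unfolding H_def by (rule sum_mono2) auto

lemma H_ln: "H m \<le> ln (2 * real m + 1)"
proof (induction m)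
  case 0 thus ?case by (simp add: H_0)
next
  case (Suc m)
  have "2 * (real (2*m+3) - real (2*m+1)) / (real (2*m+1) + real (2*m+3)) \<le> ln (real (2*m+3)) - ln (real (2*m+1))"
    by (rule ln_inverse_approx_ge) auto
  moreover have "2 * (real (2*m+3) - real (2*m+1)) / (real (2*m+1) + real (2*m+3)) = 1 / (real m + 1)"
    by (simp add: field_simps)
  moreover have "ln (real (2*m+3)) = ln (2*real m+3)" "ln (real (2*m+1)) = ln (2*real m+1)" by simp_all
  ultimately have "1 / (real m + 1) \<le> ln (2 * real m + 3) - ln (2 * real m + 1)" by linarith
  with Suc show ?case by (simp add: H_Suc algebra_simps)
qed

lemma sum_inv_diff: "(\<Sum>j<k. 1 / (real k - real j)) = H k"
proof (induction k)
  case 0 thus ?case by (simp add: H_0)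
next
  case (Suc k)
  have "(\<Sum>j<Suc k. 1 / (real (Suc k) - real j)) = 1 / (real k + 1) + (\<Sum>j<k. 1 / (real (Suc k) - real (Suc j)))"
    by (subst sum.lessThan_Suc_shift) simp
  also have "\<dots> = H (Suc k)" using Suc by (simp add: H_Suc)
  finally show ?case .
qed

lemma sum_inv_plus: "(\<Sum>j<M. 1 / (real (Suc p) + real j)) = H (p + M) - H p"
  by (induction M) (auto simp: H_Suc H_0 algebra_simps)

lemma sum_tele: "(\<Sum>j\<in>{k+1..k+M}. (1 / (real j - real k) - 1 / (real j + real k))) = H M - H (M + 2*k) + H (2*k)"
proof (induction M)
  case 0 thus ?case by (simp add: H_0)
next
  case (Suc M)
  have "(\<Sum>j\<in>{k+1..k+Suc M}. (1 / (real j - real k) - 1 / (real j + real k)))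
     = (\<Sum>j\<in>{k+1..k+M}. (1 / (real j - real k) - 1 / (real j + real k))) + (1 / (real M + 1) - 1 / (real (M + 2*k) + 1))"
    by (simp add: algebra_simps)
  also have "\<dots> = H (Suc M) - H (Suc M + 2*k) + H (2*k)" using Suc by (simp add: H_Suc)
  finally show ?case .
qed



lemma diff_formula:
  assumes "n > 0"
  shows "cheb_node n k - cheb_node n j = 2 * sin ((real k + real j) * pi / (2 * real n)) * sin ((real k - real j) * pi / (2*real n))"
proof -
  have "cheb_node n k - cheb_node n j = cos (real j * pi / real n) - cos (real k * pi / real n)"
    unfolding cheb_node_def by simp
  also have "\<dots> = 2 * sin ((real j * pi / real n + real k * pi / real n) / 2) * sin ((real k * pi / real n - real j * pi / real n) / 2)"
    by (rule cos_diff_cos)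
  also have "(real j * pi / real n + real k * pi / real n) / 2 = (real k + real j) * pi / (2 * real n)"
    using assms by (simp add: field_simps)
  also have "(real k * pi / real n - real j * pi / real n) / 2 = (real k - real j) * pi / (2 * real n)"
    using assms by (simp add: field_simps)
  finally show ?thesis .
qed

lemma inv2_mono: fixes x y :: real assumes "0 < y" "y \<le> x" shows "1 / (2 * x) \<le> 1 / (2 * y)"
  using assms by (simp add: frac_le)

lemma partA:
  assumes n: "n \<ge> 2" and k: "1 \<le> k" "2 * k \<le> n"
  shows "(\<Sum>j<k. 1 / (cheb_node n k - cheb_node n j))
              \<le> (1 + real k * ln (4 * real k - 1))
                 / (2 * sin (real k * pi / real n) * sin (real k * pi / (2 * real n)))"
proof -
  define c where "c = pi / real n"
  have c: "c > 0" using n by (simp add: c_def)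
  define S1 where "S1 = sin (real k * pi / real n)"
  define S2 where "S2 = sin (real k * pi / (2 * real n))"
  have kn: "real k * c \<le> pi / 2" using k n by (simp add: c_def field_simps)
  have kc: "real k * pi / real n = real k * c" by (simp add: c_def)
  have kc2: "real k * pi / (2 * real n) = real k * c / 2" by (simp add: c_def)
  have S1: "S1 > 0" unfolding S1_def kc
  proof (rule sin_gt_zero)
    show "0 < real k * c" using c k by simp
    show "real k * c < pi" using kn pi_gt_zero by linarith
  qed
  have S2: "S2 > 0" unfolding S2_def
    using kn c k by (intro sin_gt_zero) (auto simp: c_def field_simps)
  have tm: "1 / (cheb_node n k - cheb_node n j) \<le> (1 / (real k - real j) + 1 / (real k + real j)) * real k / (2 * S1 * S2)"
    if j: "j < k" for j
  proof -
    define a where "a = (real k + real j) * pi / (2 * real n)"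
    define b where "b = (real k - real j) * pi / (2 * real n)"
    have ac: "a = (real k + real j) * c / 2" by (simp add: a_def c_def)
    have bc: "b = (real k - real j) * c / 2" by (simp add: b_def c_def)
    have jk: "real j < real k" using j by simp
    have "a * S1 \<le> (real k * c) * sin a" unfolding S1_def kc
    proof (rule sin_ratio)
      show "0 \<le> a" using c by (simp add: ac)
      have "(real k + real j) * c \<le> (2 * real k) * c" using jk c by (intro mult_right_mono) auto
      thus "a \<le> real k * c" unfolding ac by simp
      show "real k * c \<le> pi" using kn pi_gt_zero by linarith
    qed
    hence "((real k + real j) / 2 * S1) * c \<le> (real k * sin a) * c" by (simp add: ac algebra_simps)
    hence A1: "(real k + real j) / 2 * S1 \<le> real k * sin a" using c by simp
    have "b * S2 \<le> (real k * c / 2) * sin b" unfolding S2_def kc2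
    proof (rule sin_ratio)
      show "0 \<le> b" using c jk by (simp add: bc)
      have "(real k - real j) * c \<le> real k * c" using jk c by (intro mult_right_mono) auto
      thus "b \<le> real k * c / 2" unfolding bc by simp
      show "real k * c / 2 \<le> pi" using kn pi_gt_zero by linarith
    qed
    hence "((real k - real j) / 2 * S2) * c \<le> (real k / 2 * sin b) * c" by (simp add: bc algebra_simps)
    hence A2: "(real k - real j) * S2 \<le> real k * sin b" using c by simp
    have p1: "(real k + real j) / 2 * S1 > 0" using S1 k by simp
    have p2: "(real k - real j) * S2 > 0" using S2 jk by simp
    have "((real k + real j) / 2 * S1) * ((real k - real j) * S2) \<le> (real k * sin a) * (real k * sin b)"
      by (rule mult_mono[OF A1 A2]) (use A1 p1 p2 in linarith)+
    hence B: "(real k + real j) * (real k - real j) * S1 * S2 \<le> 2 * (real k)\<^sup>2 * (sin a * sin b)"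
      by (simp add: power2_eq_square algebra_simps)
    have pos: "(real k + real j) * (real k - real j) * S1 * S2 > 0" using mult_pos_pos[OF p1 p2] by (simp add: algebra_simps)
    have "1 / (cheb_node n k - cheb_node n j) = 1 / (2 * (sin a * sin b))"
      using n by (simp add: diff_formula a_def b_def mult.assoc)
    also have "\<dots> \<le> 1 / (2 * ((real k + real j) * (real k - real j) * S1 * S2 / (2 * (real k)\<^sup>2)))"
    proof -
      have kk: "2 * (real k)\<^sup>2 > 0" using k by simp
      have Q: "(real k + real j) * (real k - real j) * S1 * S2 / (2 * (real k)\<^sup>2) \<le> sin a * sin b"
        using B kk by (simp add: pos_divide_le_eq mult.commute)
      have Qp: "(real k + real j) * (real k - real j) * S1 * S2 / (2 * (real k)\<^sup>2) > 0"
        using pos kk by simp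
      show ?thesis by (rule inv2_mono[OF Qp Q])
    qed
    also have "\<dots> = (1 / (real k - real j) + 1 / (real k + real j)) * real k / (2 * S1 * S2)"
      using jk k S1 S2 by (simp add: field_simps power2_eq_square)
    finally show ?thesis .
  qed
  have "(\<Sum>j<k. 1 / (cheb_node n k - cheb_node n j)) \<le> (\<Sum>j<k. (1 / (real k - real j) + 1 / (real k + real j)) * real k / (2 * S1 * S2))"
    by (intro sum_mono tm) auto
  also have "\<dots> = (H k + (\<Sum>j<k. 1 / (real k + real j))) * real k / (2 * S1 * S2)"
    by (simp add: sum_divide_distrib[symmetric] sum_distrib_right[symmetric] sum.distrib sum_inv_diff)
  also have "\<dots> \<le> (1 / real k + ln (4 * real k - 1)) * real k / (2 * S1 * S2)"
  proof -
    obtain p where p: "k = Suc p" using k by (cases k) auto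
    have "H k + (\<Sum>j<k. 1 / (real k + real j)) = 1 / real k + H (p + k)"
      using sum_inv_plus[of p k] by (simp add: p H_Suc)
    also have "\<dots> \<le> 1 / real k + ln (4 * real k - 1)"
      using H_ln[of "p+k"] by (simp add: p algebra_simps)
    finally show ?thesis using S1 S2 by (intro divide_right_mono mult_right_mono) auto
  qed
  also have "\<dots> = (1 + real k * ln (4 * real k - 1)) / (2 * S1 * S2)"
    using k S1 S2 by (simp add: field_simps)
  finally show ?thesis by (simp add: S1_def S2_def)
qed



lemma S1_lower:
  assumes n: "n \<ge> 2" and k: "2 * k \<le> n"
  shows "2 * real k / real n \<le> sin (real k * pi / real n)"
proof -
  have nn: "real n > 0" using n by simp
  have "(real k * pi / real n) * sin (pi/2) \<le> (pi/2) * sin (real k * pi / real n)"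
  proof (rule sin_ratio)
    show "0 \<le> real k * pi / real n" by simp
    have "(real k * 2) * pi \<le> real n * pi" using k by (intro mult_right_mono) auto
    thus "real k * pi / real n \<le> pi / 2" using nn by (simp add: field_simps)
    show "pi / 2 \<le> pi" by simp
  qed
  hence "(2 * real k / real n) * (pi / 2) \<le> sin (real k * pi / real n) * (pi / 2)"
    by (simp add: field_simps)
  thus ?thesis by (rule mult_right_le_imp_le) simp
qed

lemma S2_lower:
  assumes n: "n \<ge> 2" and k: "2 * k \<le> n"
  shows "sqrt 2 * real k / real n \<le> sin (real k * pi / (2 * real n))"
proof -
  have nn: "real n > 0" using n by simp
  have "(real k * pi / (2 * real n)) * sin (pi/4) \<le> (pi/4) * sin (real k * pi / (2 * real n))"
  proof (rule sin_ratio)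
    show "0 \<le> real k * pi / (2 * real n)" by simp
    have "(real k * 2) * pi \<le> real n * pi" using k by (intro mult_right_mono) auto
    thus "real k * pi / (2 * real n) \<le> pi / 4" using nn by (simp add: field_simps)
    show "pi / 4 \<le> pi" by simp
  qed
  hence "(sqrt 2 * real k / real n) * (pi / 8) \<le> sin (real k * pi / (2 * real n)) * (pi / 8)"
    by (simp add: field_simps sin_45)
  thus ?thesis by (rule mult_right_le_imp_le) simp
qed

lemma partB:
  assumes n: "n \<ge> 2" and k: "1 \<le> k" "2 * k \<le> n"
  shows "(1 + real k * ln (4 * real k - 1))
                 / (2 * sin (real k * pi / real n) * sin (real k * pi / (2 * real n)))
              \<le> (real n)\<^sup>2 / (4 * sqrt 2 * (real k)\<^sup>2) * (1 + real k * ln (4 * real k - 1))"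
proof -
  define X where "X = 1 + real k * ln (4 * real k - 1)"
  have X: "X \<ge> 0" unfolding X_def using k by (intro add_nonneg_nonneg mult_nonneg_nonneg ln_ge_zero) auto
  have nn: "real n > 0" using n by simp
  have p1: "2 * real k / real n > 0" using k nn by simp
  have p2: "sqrt 2 * real k / real n > 0" using k nn by simp
  have "(2 * real k / real n) * (sqrt 2 * real k / real n) \<le> sin (real k * pi / real n) * sin (real k * pi / (2 * real n))"
    by (rule mult_mono[OF S1_lower[OF n k(2)] S2_lower[OF n k(2)]]) (use p1 p2 S1_lower[OF n k(2)] in linarith)+
  moreover have "4 * sqrt 2 * (real k)\<^sup>2 / (real n)\<^sup>2 = 2 * ((2 * real k / real n) * (sqrt 2 * real k / real n))"
    by (simp add: power2_eq_square field_simps)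
  ultimately have le: "4 * sqrt 2 * (real k)\<^sup>2 / (real n)\<^sup>2 \<le> 2 * sin (real k * pi / real n) * sin (real k * pi / (2 * real n))"
    by linarith
  have pos: "4 * sqrt 2 * (real k)\<^sup>2 / (real n)\<^sup>2 > 0" using k nn by simp
  have "X / (2 * sin (real k * pi / real n) * sin (real k * pi / (2 * real n))) \<le> X / (4 * sqrt 2 * (real k)\<^sup>2 / (real n)\<^sup>2)"
    by (rule frac_le[OF X order_refl pos le])
  also have "\<dots> = (real n)\<^sup>2 / (4 * sqrt 2 * (real k)\<^sup>2) * X" using nn k by (simp add: field_simps)
  finally show ?thesis unfolding X_def .
qed

lemma partD:
  assumes n: "n \<ge> 2" and k: "1 \<le> k" "2 * k \<le> n"
  shows "(\<Sum>j\<in>{k+1..n}. 1 / (cheb_node n j - cheb_node n k))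
              \<le> 3 * (real n)\<^sup>2 / (4 * sqrt 2 * real k) * ln (4 * real k + 1)"
proof -
  have nn: "real n > 0" using n by simp
  define K where "K = 3 * (real n)\<^sup>2 / (4 * sqrt 2 * real k)"
  have K: "K > 0" using nn k by (simp add: K_def)
  have tm: "1 / (cheb_node n j - cheb_node n k) \<le> K * (1 / (real j - real k) - 1 / (real j + real k))"
    if j: "j \<in> {k+1..n}" for j
  proof -
    define a where "a = (real j + real k) * pi / (2 * real n)"
    define b where "b = (real j - real k) * pi / (2 * real n)"
    have jk: "real k < real j" "real j \<le> real n" using j by auto
    have sr: "a * sin (3 * pi / 4) \<le> (3 * pi / 4) * sin a"
    proof (rule sin_ratio)
      show "0 \<le> a" unfolding a_def by simp
      have "((real j + real k) * 2) * pi \<le> (3 * real n) * pi" using jk k by (intro mult_right_mono) auto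
      thus "a \<le> 3 * pi / 4" unfolding a_def using nn by (simp add: field_simps)
      show "3 * pi / 4 \<le> pi" by simp
    qed
    have s34: "sin (3 * pi / 4) = sqrt 2 / 2"
    proof -
      have "3 * pi / 4 = pi - pi / 4" by simp
      thus ?thesis using sin_pi_minus[of "pi/4"] sin_45 by simp
    qed
    have "((real j + real k) * sqrt 2) * (pi / (8 * real n)) \<le> (3 * real n * sin a) * (pi / (8 * real n))"
      using sr[unfolded s34] unfolding a_def using nn by (simp add: field_simps)
    hence A1: "(real j + real k) * sqrt 2 \<le> 3 * real n * sin a"
      by (rule mult_right_le_imp_le) (use nn in simp)
    have "b * sin (pi / 2) \<le> (pi / 2) * sin b"
    proof (rule sin_ratio)
      show "0 \<le> b" unfolding b_def using jk by simp
      have "(real j - real k) * pi \<le> real n * pi" using jk k by (intro mult_right_mono) auto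
      thus "b \<le> pi / 2" unfolding b_def using nn by (simp add: field_simps)
      show "pi / 2 \<le> pi" by simp
    qed
    hence "(real j - real k) * (pi / (2 * real n)) \<le> (real n * sin b) * (pi / (2 * real n))"
      unfolding b_def using nn by (simp add: field_simps)
    hence A2: "(real j - real k) \<le> real n * sin b"
      by (rule mult_right_le_imp_le) (use nn in simp)
    have p1: "(real j + real k) * sqrt 2 > 0" using jk k by simp
    have p2: "real j - real k > 0" using jk by simp
    have "((real j + real k) * sqrt 2) * (real j - real k) \<le> (3 * real n * sin a) * (real n * sin b)"
      by (rule mult_mono[OF A1 A2]) (use A1 p1 p2 in linarith)+
    hence B: "(real j + real k) * sqrt 2 * (real j - real k) / (3 * (real n)\<^sup>2) \<le> sin a * sin b"
      using nn by (simp add: pos_divide_le_eq power2_eq_square algebra_simps)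
    have Qp: "(real j + real k) * sqrt 2 * (real j - real k) / (3 * (real n)\<^sup>2) > 0"
      using p1 p2 nn by simp
    have "1 / (cheb_node n j - cheb_node n k) = 1 / (2 * (sin a * sin b))"
      using nn by (simp add: diff_formula a_def b_def mult.assoc)
    also have "\<dots> \<le> 1 / (2 * ((real j + real k) * sqrt 2 * (real j - real k) / (3 * (real n)\<^sup>2)))"
      by (rule inv2_mono[OF Qp B])
    also have "\<dots> = K * (1 / (real j - real k) - 1 / (real j + real k))"
    proof -
      define D where "D = (real j - real k) * (real j + real k)"
      have D: "D > 0" unfolding D_def using p2 jk by simp
      have e: "1 / (real j - real k) - 1 / (real j + real k) = 2 * real k / D"
        unfolding D_def using p2 jk by (simp add: field_simps)
      have e2: "(real j + real k) * sqrt 2 * (real j - real k) = sqrt 2 * D" unfolding D_def by simp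
      show ?thesis unfolding e e2 K_def using D k nn by (simp add: field_simps)
    qed
    finally show ?thesis .
  qed
  have "(\<Sum>j\<in>{k+1..n}. 1 / (cheb_node n j - cheb_node n k)) \<le> (\<Sum>j\<in>{k+1..n}. K * (1 / (real j - real k) - 1 / (real j + real k)))"
    by (intro sum_mono tm)
  also have "\<dots> = K * (\<Sum>j\<in>{k+1..k+(n-k)}. (1 / (real j - real k) - 1 / (real j + real k)))"
    using k by (simp add: sum_distrib_left)
  also have "\<dots> = K * (H (n-k) - H (n - k + 2*k) + H (2*k))" by (simp only: sum_tele)
  also have "\<dots> \<le> K * ln (4 * real k + 1)"
  proof (intro mult_left_mono)
    have "H (n-k) \<le> H (n - k + 2*k)" by (rule H_mono) simp
    moreover have "H (2*k) \<le> ln (4 * real k + 1)" using H_ln[of "2*k"] by simp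
    ultimately show "H (n-k) - H (n - k + 2*k) + H (2*k) \<le> ln (4 * real k + 1)" by linarith
  qed (use K in simp)
  finally show ?thesis unfolding K_def .
qed



lemma cheb_mono:
  assumes "n > 0" "j < i" "i \<le> n"
  shows "cheb_node n j < cheb_node n i"
proof -
  have nn: "real n > 0" using assms by simp
  have "cos (real i * pi / real n) < cos (real j * pi / real n)"
  proof (rule cos_monotone_0_pi)
    show "0 \<le> real j * pi / real n" by simp
    show "real j * pi / real n < real i * pi / real n"
      using assms nn by (intro divide_strict_right_mono mult_strict_right_mono) auto
    have "real i * pi \<le> real n * pi" using assms by (intro mult_right_mono) auto
    thus "real i * pi / real n \<le> pi" using nn by (simp add: field_simps)
  qed
  thus ?thesis unfolding cheb_node_def by simp
qed

lemma ln375: "ln 3 + 3 * ln 5 < (6::real)"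
proof -
  have "ln (375::real) = ln 3 + ln (5 ^ 3)" using ln_mult[of "3::real" "5^3"] by simp
  also have "\<dots> = ln 3 + 3 * ln 5" using ln_realpow[of "5::real" 3] by simp
  finally have e: "ln (375::real) = ln 3 + 3 * ln 5" .
  have "exp (1::real) \<ge> 2718 / 1000" using e_approx_32 by (simp add: abs_if split: if_split_asm)
  hence "(2718 / 1000) ^ 6 \<le> exp (1::real) ^ 6" by (intro power_mono) auto
  also have "\<dots> = exp (real 6 * 1)" by (subst exp_of_nat_mult) simp
  finally have "(2718 / 1000) ^ 6 \<le> exp (6::real)" by simp
  moreover have "(375::real) < (2718 / 1000) ^ 6" by (simp add: eval_nat_numeral)
  ultimately have "(375::real) < exp 6" by linarith
  hence "ln (375::real) < ln (exp 6)" by (subst ln_less_cancel_iff) auto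
  thus ?thesis using e by simp
qed

lemma sqrt2_gt: "sqrt 2 > (1.4::real)"
  by (rule real_less_rsqrt) (simp add: power2_eq_square)

lemma const_bound: "(real n)\<^sup>2 / (4 * sqrt 2) * (1 + ln 3 + 3 * ln 5) < 1.3 * (real n)\<^sup>2" if "n \<ge> 2"
proof -
  have s: "4 * sqrt 2 > 0" by simp
  have "1 + ln 3 + 3 * ln 5 < 1.3 * (4 * sqrt 2)" using ln375 sqrt2_gt by linarith
  hence "(1 + ln 3 + 3 * ln 5) / (4 * sqrt 2) < 1.3" using s by (simp add: divide_less_eq)
  moreover have "(real n)\<^sup>2 > 0" using that by simp
  ultimately have "(real n)\<^sup>2 * ((1 + ln 3 + 3 * ln 5) / (4 * sqrt 2)) < (real n)\<^sup>2 * 1.3"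
    by (intro mult_strict_left_mono) auto
  thus ?thesis by (simp add: field_simps)
qed



lemma pow_ge5: "4 * k + 1 \<le> (5::nat) ^ k"
proof (induction k)
  case (Suc k)
  have "1 \<le> (5::nat) ^ k" by simp
  thus ?case using Suc by simp
qed simp

lemma pow_ge3: "4 * k \<le> (3::nat) ^ k + 1"
proof (induction k)
  case (Suc k)
  note IH = Suc.IH
  show ?case
  proof (cases k)
    case 0 thus ?thesis by simp
  next
    case (Suc m)
    have "3 \<le> (3::nat) ^ k" unfolding Suc by simp
    thus ?thesis using IH by simp
  qed
qed simp

lemma partCE:
  assumes n: "n \<ge> 2" and k: "1 \<le> k"
  shows "(real n)\<^sup>2 / (4 * sqrt 2 * (real k)\<^sup>2) * (1 + real k * ln (4 * real k - 1))
       + 3 * (real n)\<^sup>2 / (4 * sqrt 2 * real k) * ln (4 * real k + 1)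
       \<le> (real n)\<^sup>2 / (4 * sqrt 2) * (1 + ln 3 + 3 * ln 5)"
proof -
  have kk: "real k \<ge> 1" using k by simp
  have L1: "ln (4 * real k - 1) \<le> real k * ln 3"
  proof -
    have "real (4 * k) \<le> real (3 ^ k + 1)" using pow_ge3[of k] by (simp only: of_nat_le_iff)
    hence "4 * real k - 1 \<le> real (3 ^ k)" by simp
    hence "ln (4 * real k - 1) \<le> ln (real (3 ^ k))" using kk by (intro ln_mono) auto
    thus ?thesis by (simp add: ln_realpow)
  qed
  have L2: "ln (4 * real k + 1) \<le> real k * ln 5"
  proof -
    have "real (4 * k + 1) \<le> real (5 ^ k)" using pow_ge5[of k] by (simp only: of_nat_le_iff)
    hence "4 * real k + 1 \<le> real (5 ^ k)" by simp
    hence "ln (4 * real k + 1) \<le> ln (real (5 ^ k))" using kk by (intro ln_mono) auto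
    thus ?thesis by (simp add: ln_realpow)
  qed
  have "1 \<le> (real k)\<^sup>2" using kk by (simp add: one_le_power)
  hence "1 / (real k)\<^sup>2 \<le> 1" by (simp add: divide_le_eq)
  moreover have "ln (4 * real k - 1) / real k \<le> ln 3" using L1 kk by (simp add: divide_le_eq mult.commute)
  moreover have "ln (4 * real k + 1) / real k \<le> ln 5" using L2 kk by (simp add: divide_le_eq mult.commute)
  ultimately have Q: "1 / (real k)\<^sup>2 + ln (4 * real k - 1) / real k + 3 * (ln (4 * real k + 1) / real k) \<le> 1 + ln 3 + 3 * ln 5"
    by linarith
  have "(real n)\<^sup>2 / (4 * sqrt 2 * (real k)\<^sup>2) * (1 + real k * ln (4 * real k - 1))
       + 3 * (real n)\<^sup>2 / (4 * sqrt 2 * real k) * ln (4 * real k + 1)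
       = (real n)\<^sup>2 / (4 * sqrt 2) * (1 / (real k)\<^sup>2 + ln (4 * real k - 1) / real k + 3 * (ln (4 * real k + 1) / real k))"
    using kk by (simp add: field_simps power2_eq_square)
  also have "\<dots> \<le> (real n)\<^sup>2 / (4 * sqrt 2) * (1 + ln 3 + 3 * ln 5)"
    by (rule mult_left_mono[OF Q]) simp
  finally show ?thesis .
qed



lemma partH:
  assumes n: "n \<ge> 2"
  shows "(\<Sum>j\<in>{1..n}. 1 / (cheb_node n j - cheb_node n 0)) \<le> pi\<^sup>2 * (real n)\<^sup>2 / 12"
proof -
  have nn: "real n > 0" using n by simp
  have tm: "1 / (cheb_node n j - cheb_node n 0) \<le> (real n)\<^sup>2 / 2 * (1 / (real j)\<^sup>2)" if j: "j \<in> {1..n}" for j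
  proof -
    define w where "w = real j * pi / (2 * real n)"
    have jj: "real j \<ge> 1" "real j \<le> real n" using j by auto
    have "w * sin (pi / 2) \<le> (pi / 2) * sin w"
    proof (rule sin_ratio)
      show "0 \<le> w" unfolding w_def by simp
      have "real j * pi \<le> real n * pi" using jj by (intro mult_right_mono) auto
      thus "w \<le> pi / 2" unfolding w_def using nn by (simp add: field_simps)
      show "pi / 2 \<le> pi" by simp
    qed
    hence "real j * (pi / (2 * real n)) \<le> (real n * sin w) * (pi / (2 * real n))"
      unfolding w_def using nn by (simp add: field_simps)
    hence A: "real j \<le> real n * sin w" by (rule mult_right_le_imp_le) (use nn in simp)
    have "(real j)\<^sup>2 \<le> (real n * sin w)\<^sup>2" using A jj by (intro power_mono) auto
    hence B: "(real j)\<^sup>2 / (real n)\<^sup>2 \<le> (sin w)\<^sup>2" using nn by (simp add: power_mult_distrib divide_le_eq mult.commute)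
    have Qp: "(real j)\<^sup>2 / (real n)\<^sup>2 > 0" using jj nn by simp
    have "cheb_node n j - cheb_node n 0 = 1 - cos (2 * w)"
      unfolding cheb_node_def w_def using nn by simp
    also have "\<dots> = 2 * (sin w)\<^sup>2" by (simp add: cos_double_sin)
    finally have "1 / (cheb_node n j - cheb_node n 0) = 1 / (2 * (sin w)\<^sup>2)" by simp
    also have "\<dots> \<le> 1 / (2 * ((real j)\<^sup>2 / (real n)\<^sup>2))" by (rule inv2_mono[OF Qp B])
    also have "\<dots> = (real n)\<^sup>2 / 2 * (1 / (real j)\<^sup>2)" using jj nn by (simp add: field_simps)
    finally show ?thesis .
  qed
  have "(\<Sum>j\<in>{1..n}. 1 / (cheb_node n j - cheb_node n 0)) \<le> (\<Sum>j\<in>{1..n}. (real n)\<^sup>2 / 2 * (1 / (real j)\<^sup>2))"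
    by (intro sum_mono tm)
  also have "\<dots> = (real n)\<^sup>2 / 2 * (\<Sum>i<n. 1 / (real i + 1)\<^sup>2)"
  proof -
    have "(\<Sum>j\<in>{1..n}. 1 / (real j)\<^sup>2) = (\<Sum>i<n. 1 / (real i + 1)\<^sup>2)"
      by (simp add: sum.atLeast1_atMost_eq add.commute)
    thus ?thesis by (subst sum_distrib_left[symmetric]) (rule arg_cong)
  qed
  also have "\<dots> \<le> (real n)\<^sup>2 / 2 * (pi\<^sup>2 / 6)"
  proof (rule mult_left_mono)
    have sm: "(\<lambda>i. 1 / (real i + 1)\<^sup>2) sums (pi\<^sup>2 / 6)"
      using inverse_squares_sums by (simp add: add.commute)
    have "(\<Sum>i<n. 1 / (real i + 1)\<^sup>2) \<le> (\<Sum>i. 1 / (real i + 1)\<^sup>2)"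
      by (rule sum_le_suminf) (use sm sums_summable in auto)
    also have "\<dots> = pi\<^sup>2 / 6" using sm sums_unique by (metis (no_types, lifting))
    finally show "(\<Sum>i<n. 1 / (real i + 1)\<^sup>2) \<le> pi\<^sup>2 / 6" .
  qed simp
  also have "\<dots> = pi\<^sup>2 * (real n)\<^sup>2 / 12" by simp
  finally show ?thesis .
qed

lemma pi_bound: "pi\<^sup>2 * (real n)\<^sup>2 / 12 < 0.9 * (real n)\<^sup>2" if "n \<ge> 2"
proof -
  have "pi\<^sup>2 \<le> 3.15\<^sup>2" using pi_approx pi_gt_zero by (intro power_mono) auto
  hence "pi\<^sup>2 / 12 < 0.9" by (simp add: power2_eq_square)
  moreover have "(real n)\<^sup>2 > 0" using that by simp
  ultimately have "(real n)\<^sup>2 * (pi\<^sup>2 / 12) < (real n)\<^sup>2 * 0.9" by (intro mult_strict_left_mono)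
  thus ?thesis by (simp add: field_simps)
qed




lemma partF:
  assumes n: "n \<ge> 2" and k: "1 \<le> k" "2 * k \<le> n"
  shows "(\<Sum>j\<in>{0..n} - {k}. 1 / \<bar>cheb_node n k - cheb_node n j\<bar>)
       = (\<Sum>j<k. 1 / (cheb_node n k - cheb_node n j)) + (\<Sum>j\<in>{k+1..n}. 1 / (cheb_node n j - cheb_node n k))"
proof -
  have set: "{0..n} - {k} = {..<k} \<union> {k+1..n}" using k by auto
  have "(\<Sum>j\<in>{0..n} - {k}. 1 / \<bar>cheb_node n k - cheb_node n j\<bar>)
      = (\<Sum>j<k. 1 / \<bar>cheb_node n k - cheb_node n j\<bar>) + (\<Sum>j\<in>{k+1..n}. 1 / \<bar>cheb_node n k - cheb_node n j\<bar>)"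
    unfolding set by (rule sum.union_disjoint) auto
  also have "(\<Sum>j<k. 1 / \<bar>cheb_node n k - cheb_node n j\<bar>) = (\<Sum>j<k. 1 / (cheb_node n k - cheb_node n j))"
  proof (rule sum.cong[OF refl])
    fix j assume "j \<in> {..<k}"
    hence "cheb_node n j < cheb_node n k" using n k by (intro cheb_mono) auto
    thus "1 / \<bar>cheb_node n k - cheb_node n j\<bar> = 1 / (cheb_node n k - cheb_node n j)" by simp
  qed
  also have "(\<Sum>j\<in>{k+1..n}. 1 / \<bar>cheb_node n k - cheb_node n j\<bar>) = (\<Sum>j\<in>{k+1..n}. 1 / (cheb_node n j - cheb_node n k))"
  proof (rule sum.cong[OF refl])
    fix j assume "j \<in> {k+1..n}"
    hence "cheb_node n k < cheb_node n j" using n k by (intro cheb_mono) auto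
    thus "1 / \<bar>cheb_node n k - cheb_node n j\<bar> = 1 / (cheb_node n j - cheb_node n k)" by simp
  qed
  finally show ?thesis .
qed

theorem lemma8:
  fixes n :: nat
  assumes "n \<ge> 2"
  shows "(\<forall>k::nat. 1 \<le> k \<and> 2 * k \<le> n \<longrightarrow>
            (\<Sum>j<k. 1 / (cheb_node n k - cheb_node n j))
              \<le> (1 + real k * ln (4 * real k - 1))
                 / (2 * sin (real k * pi / real n) * sin (real k * pi / (2 * real n)))
          \<and> (1 + real k * ln (4 * real k - 1))
                 / (2 * sin (real k * pi / real n) * sin (real k * pi / (2 * real n)))
              \<le> (real n)\<^sup>2 / (4 * sqrt 2 * (real k)\<^sup>2) * (1 + real k * ln (4 * real k - 1))
          \<and> (\<Sum>j\<in>{k+1..n}. 1 / (cheb_node n j - cheb_node n k))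
              \<le> 3 * (real n)\<^sup>2 / (4 * sqrt 2 * real k) * ln (4 * real k + 1)
          \<and> (\<Sum>j\<in>{0..n} - {k}. 1 / \<bar>cheb_node n k - cheb_node n j\<bar>)
              \<le> (real n)\<^sup>2 / (4 * sqrt 2) * (1 + ln 3 + 3 * ln 5)
          \<and> (real n)\<^sup>2 / (4 * sqrt 2) * (1 + ln 3 + 3 * ln 5) < 1.3 * (real n)\<^sup>2)
       \<and> (\<Sum>j\<in>{1..n}. 1 / (cheb_node n j - cheb_node n 0)) \<le> pi\<^sup>2 * (real n)\<^sup>2 / 12
       \<and> pi\<^sup>2 * (real n)\<^sup>2 / 12 < 0.9 * (real n)\<^sup>2"
proof (intro conjI allI impI)
  fix k :: nat assume kk: "1 \<le> k \<and> 2 * k \<le> n"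
  hence k: "1 \<le> k" "2 * k \<le> n" by auto
  note A = partA[OF assms k]
  note B = partB[OF assms k]
  note D = partD[OF assms k]
  show "(\<Sum>j<k. 1 / (cheb_node n k - cheb_node n j))
              \<le> (1 + real k * ln (4 * real k - 1))
                 / (2 * sin (real k * pi / real n) * sin (real k * pi / (2 * real n)))" by (rule A)
  show "(1 + real k * ln (4 * real k - 1))
                 / (2 * sin (real k * pi / real n) * sin (real k * pi / (2 * real n)))
              \<le> (real n)\<^sup>2 / (4 * sqrt 2 * (real k)\<^sup>2) * (1 + real k * ln (4 * real k - 1))" by (rule B)
  show "(\<Sum>j\<in>{k+1..n}. 1 / (cheb_node n j - cheb_node n k))
              \<le> 3 * (real n)\<^sup>2 / (4 * sqrt 2 * real k) * ln (4 * real k + 1)" by (rule D)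
  show "(\<Sum>j\<in>{0..n} - {k}. 1 / \<bar>cheb_node n k - cheb_node n j\<bar>)
              \<le> (real n)\<^sup>2 / (4 * sqrt 2) * (1 + ln 3 + 3 * ln 5)"
    unfolding partF[OF assms k] using A B D partCE[OF assms k(1)] by linarith
  show "(real n)\<^sup>2 / (4 * sqrt 2) * (1 + ln 3 + 3 * ln 5) < 1.3 * (real n)\<^sup>2"
    by (rule const_bound[OF assms])
next
  show "(\<Sum>j\<in>{1..n}. 1 / (cheb_node n j - cheb_node n 0)) \<le> pi\<^sup>2 * (real n)\<^sup>2 / 12"
    by (rule partH[OF assms])
  show "pi\<^sup>2 * (real n)\<^sup>2 / 12 < 0.9 * (real n)\<^sup>2" by (rule pi_bound[OF assms])
qed


end
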